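(* Let $B=(B,+,0)$ be a unitary magma and $(X,\varphi)$ a $B$-action. Then $(X,\varphi(-,0,-,0),0)$, i.e. $X$ with operation $x+x'=\varphi(x,0,x',0)$ and neutral element $0$, is a unitary magma, and $$X\xrightarrow{\langle 1,0\rangle} X\rtimes_\varphi B \underset{\langle 0,1\rangle}{\overset{\pi_B}{\rightleftarrows}} B$$ is a split extension of unitary magmas: the maps $\langle1,0\rangle(x)=(x,0)$, $\pi_B(x,b)=b$ and $\langle 0,1\rangle(b)=(0,b)$ are well-defined morphisms of unitary magmas, $\pi_B\langle0,1\rangle=1_B$, and $\langle 1,0\rangle$ is a kernel of $\pi_B$. Moreover, for $(x,b)\in X\times B$, one has $(x,b)\in X\rtimes_\varphi B$ if and only if $(x,b)=(x,0)+(0,b)$, where the sum is given by $(x,b)+(x',b')=(\varphi(x,b,x',b'),b+b')$.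
   Context: A unitary magma is a set with a binary operation $+$ and an element $0$ with $b+0=b=0+b$ for all $b$; morphisms preserve $+$ and $0$. A $B$-action is a pair $(X,\varphi)$ with $X$ a set and $\varphi\colon X\times B\times X\times B\to X$ a map such that: (1) there is an element $0\in X$ with $\varphi(x,0,0,0)=x=\varphi(0,0,x,0)$ for all $x\in X$; (2) $\varphi(x,b,0,0)=\varphi(x,0,0,b)=\varphi(0,0,x,b)$ for all $x\in X,b\in B$; (3) $\varphi(0,b,0,b')=0$ for all $b,b'\in B$; (4) writing $\varphi_{00}(x,b)=\varphi(x,0,0,b)$, for all $x,x'\in X$, $b,b'\in B$: $\varphi(x,b,x',b')=\varphi_{00}\big(\varphi(\varphi_{00}(x,b),b,\varphi_{00}(x',b'),b'),\,b+b'\big)$. The semidirect product $X\rtimes_\varphi B$ is the set $\{(x,b)\in X\times B\mid\varphi(x,0,0,b)=x\}$ with operation $(x,b)+(x',b')=(\varphi(x,b,x',b'),b+b')$ and neutral element $(0,0)$ (it is a unitary magma). *)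

theory Defs
  imports Main
begin

definition unitary_magma :: "'a set \<Rightarrow> ('a \<Rightarrow> 'a \<Rightarrow> 'a) \<Rightarrow> 'a \<Rightarrow> bool" where
  "unitary_magma M f z \<longleftrightarrow> z \<in> M \<and> (\<forall>a\<in>M. \<forall>b\<in>M. f a b \<in> M)
     \<and> (\<forall>b\<in>M. f b z = b \<and> f z b = b)"

definition magma_hom :: "'a set \<Rightarrow> ('a \<Rightarrow> 'a \<Rightarrow> 'a) \<Rightarrow> 'a \<Rightarrow>
    'b set \<Rightarrow> ('b \<Rightarrow> 'b \<Rightarrow> 'b) \<Rightarrow> 'b \<Rightarrow> ('a \<Rightarrow> 'b) \<Rightarrow> bool" where
  "magma_hom M f z N g w h \<longleftrightarrow> (\<forall>a\<in>M. h a \<in> N)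
     \<and> (\<forall>a\<in>M. \<forall>b\<in>M. h (f a b) = g (h a) (h b)) \<and> h z = w"

definition b_action :: "'b set \<Rightarrow> ('b \<Rightarrow> 'b \<Rightarrow> 'b) \<Rightarrow> 'b \<Rightarrow>
    'x set \<Rightarrow> ('x \<Rightarrow> 'b \<Rightarrow> 'x \<Rightarrow> 'b \<Rightarrow> 'x) \<Rightarrow> 'x \<Rightarrow> bool" where
  "b_action B add zB X phi zX \<longleftrightarrow>
     (\<forall>x\<in>X. \<forall>b\<in>B. \<forall>x'\<in>X. \<forall>b'\<in>B. phi x b x' b' \<in> X)
   \<and> zX \<in> X
   \<and> (\<forall>x\<in>X. phi x zB zX zB = x \<and> phi zX zB x zB = x)
   \<and> (\<forall>x\<in>X. \<forall>b\<in>B. phi x b zX zB = phi x zB zX b \<and> phi x zB zX b = phi zX zB x b)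
   \<and> (\<forall>b\<in>B. \<forall>b'\<in>B. phi zX b zX b' = zX)
   \<and> (\<forall>x\<in>X. \<forall>x'\<in>X. \<forall>b\<in>B. \<forall>b'\<in>B.
        phi x b x' b' = phi (phi (phi x zB zX b) b (phi x' zB zX b') b') zB zX (add b b'))"

text \<open>Semidirect product: carrier and operation (the operation is defined on all of X \<times> B).\<close>
definition sdp_carrier :: "'b set \<Rightarrow> 'b \<Rightarrow> 'x set \<Rightarrow> ('x \<Rightarrow> 'b \<Rightarrow> 'x \<Rightarrow> 'b \<Rightarrow> 'x) \<Rightarrow> 'x
    \<Rightarrow> ('x \<times> 'b) set" where
  "sdp_carrier B zB X phi zX = {(x, b) \<in> X \<times> B. phi x zB zX b = x}"

definition sdp_op :: "('b \<Rightarrow> 'b \<Rightarrow> 'b) \<Rightarrow> ('x \<Rightarrow> 'b \<Rightarrow> 'x \<Rightarrow> 'b \<Rightarrow> 'x)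
    \<Rightarrow> ('x \<times> 'b) \<Rightarrow> ('x \<times> 'b) \<Rightarrow> ('x \<times> 'b)" where
  "sdp_op add phi p q = (phi (fst p) (snd p) (fst q) (snd q), add (snd p) (snd q))"

text \<open>The universal property quantifies over test objects C whose elements live in the type 'c;
  since 'c is a free type variable of the theorem, this covers arbitrary unitary magmas.\<close>
definition is_kernel :: "'c itself \<Rightarrow> 'k set \<Rightarrow> ('k \<Rightarrow> 'k \<Rightarrow> 'k) \<Rightarrow> 'k \<Rightarrow>
    'a set \<Rightarrow> ('a \<Rightarrow> 'a \<Rightarrow> 'a) \<Rightarrow> 'a \<Rightarrow> 'p set \<Rightarrow> ('p \<Rightarrow> 'p \<Rightarrow> 'p) \<Rightarrow> 'p \<Rightarrow>
    ('k \<Rightarrow> 'a) \<Rightarrow> ('a \<Rightarrow> 'p) \<Rightarrow> bool" where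
  "is_kernel (_ :: 'c itself) K fK zK A fA zA P fP zP k p \<longleftrightarrow>
     magma_hom K fK zK A fA zA k \<and> magma_hom A fA zA P fP zP p
   \<and> (\<forall>y\<in>K. p (k y) = zP)
   \<and> (\<forall>(C :: 'c set) fC zC h. unitary_magma C fC zC \<and> magma_hom C fC zC A fA zA h
        \<and> (\<forall>c\<in>C. p (h c) = zP) \<longrightarrow>
        (\<exists>g. magma_hom C fC zC K fK zK g \<and> (\<forall>c\<in>C. k (g c) = h c)
           \<and> (\<forall>g'. magma_hom C fC zC K fK zK g' \<and> (\<forall>c\<in>C. k (g' c) = h c)
                   \<longrightarrow> (\<forall>c\<in>C. g' c = g c))))"

end

theory Submission
  imports Defs
begin

theorem proposition4p1:
  fixes B :: "'b set" and add :: "'b \<Rightarrow> 'b \<Rightarrow> 'b" and zB :: 'b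
    and X :: "'x set" and phi :: "'x \<Rightarrow> 'b \<Rightarrow> 'x \<Rightarrow> 'b \<Rightarrow> 'x" and zX :: 'x
  assumes "unitary_magma B add zB"
    and "b_action B add zB X phi zX"
  shows "unitary_magma X (\<lambda>x x'. phi x zB x' zB) zX
    \<and> unitary_magma (sdp_carrier B zB X phi zX) (sdp_op add phi) (zX, zB)
    \<and> magma_hom X (\<lambda>x x'. phi x zB x' zB) zX
        (sdp_carrier B zB X phi zX) (sdp_op add phi) (zX, zB) (\<lambda>x. (x, zB))
    \<and> magma_hom (sdp_carrier B zB X phi zX) (sdp_op add phi) (zX, zB) B add zB snd
    \<and> magma_hom B add zB (sdp_carrier B zB X phi zX) (sdp_op add phi) (zX, zB) (\<lambda>b. (zX, b))
    \<and> (\<forall>b\<in>B. snd (zX, b) = b)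
    \<and> is_kernel TYPE('c) X (\<lambda>x x'. phi x zB x' zB) zX
        (sdp_carrier B zB X phi zX) (sdp_op add phi) (zX, zB) B add zB (\<lambda>x. (x, zB)) snd
    \<and> (\<forall>x\<in>X. \<forall>b\<in>B. (x, b) \<in> sdp_carrier B zB X phi zX
          \<longleftrightarrow> (x, b) = sdp_op add phi (x, zB) (zX, b))"
proof -
  note U = assms(1)[unfolded unitary_magma_def]
  note A = assms(2)[unfolded b_action_def]
  have zB: "zB \<in> B" and addB: "\<And>a b. a \<in> B \<Longrightarrow> b \<in> B \<Longrightarrow> add a b \<in> B"
    and addz: "\<And>b. b \<in> B \<Longrightarrow> add b zB = b \<and> add zB b = b" using U by auto
  have cl: "\<And>x b x' b'. x \<in> X \<Longrightarrow> b \<in> B \<Longrightarrow> x' \<in> X \<Longrightarrow> b' \<in> B \<Longrightarrow> phi x b x' b' \<in> X"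
    and zX: "zX \<in> X"
    and a1: "\<And>x. x \<in> X \<Longrightarrow> phi x zB zX zB = x \<and> phi zX zB x zB = x"
    and a2: "\<And>x b. x \<in> X \<Longrightarrow> b \<in> B \<Longrightarrow> phi x b zX zB = phi x zB zX b \<and> phi x zB zX b = phi zX zB x b"
    and a3: "\<And>b b'. b \<in> B \<Longrightarrow> b' \<in> B \<Longrightarrow> phi zX b zX b' = zX"
    and a4: "\<And>x x' b b'. x \<in> X \<Longrightarrow> x' \<in> X \<Longrightarrow> b \<in> B \<Longrightarrow> b' \<in> B \<Longrightarrow>
        phi x b x' b' = phi (phi (phi x zB zX b) b (phi x' zB zX b') b') zB zX (add b b')"
    using A by blast+
  let ?S = "sdp_carrier B zB X phi zX"
  have sub: "?S \<subseteq> X \<times> B" unfolding sdp_carrier_def by auto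
  have S1: "unitary_magma X (\<lambda>x x'. phi x zB x' zB) zX"
    unfolding unitary_magma_def using zX cl zB a1 by auto
  have closed: "sdp_op add phi p q \<in> ?S" if pq: "p \<in> ?S" "q \<in> ?S" for p q
  proof -
    obtain x b where p: "p = (x,b)" "x \<in> X" "b \<in> B" "phi x zB zX b = x"
      using pq(1) unfolding sdp_carrier_def by auto
    obtain x' b' where q: "q = (x',b')" "x' \<in> X" "b' \<in> B" "phi x' zB zX b' = x'"
      using pq(2) unfolding sdp_carrier_def by auto
    have e: "phi (phi x b x' b') zB zX (add b b') = phi x b x' b'"
      using a4[OF p(2) q(2) p(3) q(3), unfolded p(4) q(4)] by (rule sym)
    show ?thesis unfolding sdp_op_def sdp_carrier_def p q
      using e cl[OF p(2) p(3) q(2) q(3)] addB[OF p(3) q(3)] by simp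
  qed
  have S2: "unitary_magma ?S (sdp_op add phi) (zX, zB)"
    unfolding unitary_magma_def
  proof (intro conjI ballI)
    show "(zX, zB) \<in> ?S" unfolding sdp_carrier_def using zX zB a3 by auto
  next
    fix a b assume "a \<in> ?S" "b \<in> ?S" then show "sdp_op add phi a b \<in> ?S" by (rule closed)
  next
    fix p assume "p \<in> ?S"
    then obtain x b where p: "p = (x,b)" "x \<in> X" "b \<in> B" "phi x zB zX b = x"
      unfolding sdp_carrier_def by auto
    show "sdp_op add phi p (zX, zB) = p" unfolding sdp_op_def p using a2 p addz by auto
    show "sdp_op add phi (zX, zB) p = p" unfolding sdp_op_def p using a2 p addz by auto
  qed
  have S3: "magma_hom X (\<lambda>x x'. phi x zB x' zB) zX ?S (sdp_op add phi) (zX, zB) (\<lambda>x. (x, zB))"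
    unfolding magma_hom_def sdp_carrier_def sdp_op_def using a1 zB addz by auto
  have S4: "magma_hom ?S (sdp_op add phi) (zX, zB) B add zB snd"
    unfolding magma_hom_def sdp_carrier_def sdp_op_def by auto
  have S5: "magma_hom B add zB ?S (sdp_op add phi) (zX, zB) (\<lambda>b. (zX, b))"
    unfolding magma_hom_def sdp_carrier_def sdp_op_def using a3 zX zB by auto
  have S7: "is_kernel TYPE('c) X (\<lambda>x x'. phi x zB x' zB) zX
        ?S (sdp_op add phi) (zX, zB) B add zB (\<lambda>x. (x, zB)) snd"
    unfolding is_kernel_def
  proof (intro conjI S3 S4 allI impI)
    show "\<forall>y\<in>X. snd (y, zB) = zB" by simp
  next
    fix C :: "'c set" and fC zC h
    assume H: "unitary_magma C fC zC \<and> magma_hom C fC zC ?S (sdp_op add phi) (zX, zB) h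
        \<and> (\<forall>c\<in>C. snd (h c) = zB)"
    have hS: "\<And>c. c \<in> C \<Longrightarrow> h c \<in> ?S" and hop: "\<And>c c'. c \<in> C \<Longrightarrow> c' \<in> C \<Longrightarrow> h (fC c c') = sdp_op add phi (h c) (h c')"
      and hz: "h zC = (zX, zB)" and hs: "\<And>c. c \<in> C \<Longrightarrow> snd (h c) = zB"
      using H unfolding magma_hom_def by auto
    have hX: "fst (h c) \<in> X" if cC: "c \<in> C" for c
    proof -
      have "h c \<in> X \<times> B" using hS[OF cC] sub by blast
      then show ?thesis by (simp add: mem_Times_iff)
    qed
    show "\<exists>g. magma_hom C fC zC X (\<lambda>x x'. phi x zB x' zB) zX g \<and> (\<forall>c\<in>C. (g c, zB) = h c) \<and>
         (\<forall>g'. magma_hom C fC zC X (\<lambda>x x'. phi x zB x' zB) zX g' \<and> (\<forall>c\<in>C. (g' c, zB) = h c) \<longrightarrow>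
               (\<forall>c\<in>C. g' c = g c))"
    proof (rule exI[of _ "\<lambda>c. fst (h c)"], intro conjI allI impI ballI)
      show "magma_hom C fC zC X (\<lambda>x x'. phi x zB x' zB) zX (\<lambda>c. fst (h c))"
        unfolding magma_hom_def using hX hop hz hs by (auto simp: sdp_op_def)
    next
      fix c assume "c \<in> C" then show "(fst (h c), zB) = h c" using hs by (metis prod.collapse)
    next
      fix g' c assume "magma_hom C fC zC X (\<lambda>x x'. phi x zB x' zB) zX g' \<and> (\<forall>c\<in>C. (g' c, zB) = h c)" "c \<in> C"
      then show "g' c = fst (h c)" by (metis fst_conv)
    qed
  qed
  have S8: "\<forall>x\<in>X. \<forall>b\<in>B. (x, b) \<in> ?S \<longleftrightarrow> (x, b) = sdp_op add phi (x, zB) (zX, b)"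
    unfolding sdp_carrier_def sdp_op_def using addz by auto
  show ?thesis using S1 S2 S3 S4 S5 S7 S8 by simp
qed

end
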